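(* Let $n\ge 2$ be an integer and $A\subseteq L_n$. If the subset $L_n$ is $z$-embedded in $(X_n,\tau(A))$, then $L_n\setminus A$ does not contain a closed uncountable subset of $(L_n,\tau_E|_{L_n})$.
   Context: For $\overline{x},\overline{a}\in\mathbb R^n$ let $|\overline{x}-\overline{a}|$ be the Euclidean distance and $B(\overline{a},\epsilon)=\{\overline{x}\in\mathbb R^n:|\overline{x}-\overline{a}|<\epsilon\}$. Let $P_n=\{\overline{x}\in\mathbb R^n: x_n>0\}$, $L_n=\{\overline{x}\in\mathbb R^n: x_n=0\}$, $X_n=P_n\cup L_n$, and let $\tau_E$ denote the Euclidean topology on $X_n$. For $\overline{a}\in L_n$ and $\epsilon>0$ put $\overline{a(\epsilon)}=(a_1,\dots,a_{n-1},\epsilon)$ and $\tilde B(\overline{a},\epsilon)=\{\overline{a}\}\cup B(\overline{a(\epsilon)},\epsilon)$. For $A\subseteq L_n$, the topology $\tau(A)$ on $X_n$ is generated by the local bases: at $\overline{a}\in P_n$, the sets $B(\overline{a},\epsilon)$ with $0<\epsilon<a_n$; at $\overline{a}\in A$, the sets $B(\overline{a},\epsilon)\cap X_n$ with $\epsilon>0$; at $\overline{a}\in L_n\setminus A$, the sets $\tilde B(\overline{a},\epsilon)$ with $\epsilon>0$. A subset $Y$ of a space $X$ is $z$-embedded in $X$ if every zero set of $Y$ is the trace on $Y$ of some zero set of $X$. *)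

theory Defs
  imports "HOL-Analysis.Analysis"
begin

text \<open>Points of R^n are modelled as pairs (y, t) with y in R^(n-1) (type real^'m)
  and t = x_n the last coordinate; n = CARD('m) + 1 >= 2. The product metric on
  (real^'m) \<times> real is the Euclidean one.\<close>

type_synonym 'm pt = "(real^'m) \<times> real"

definition Pn :: "'m::finite pt set" where "Pn = {x. snd x > 0}"
definition Ln :: "'m::finite pt set" where "Ln = {x. snd x = 0}"
definition Xn :: "'m::finite pt set" where "Xn = Pn \<union> Ln"

definition lift :: "'m::finite pt \<Rightarrow> real \<Rightarrow> 'm pt" where
  "lift a e = (fst a, e)"
definition tball :: "'m::finite pt \<Rightarrow> real \<Rightarrow> 'm pt set" where
  "tball a e = {a} \<union> ball (lift a e) e"

definition basic_nbhd :: "'m::finite pt set \<Rightarrow> 'm pt \<Rightarrow> 'm pt set \<Rightarrow> bool" where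
  "basic_nbhd A a U \<longleftrightarrow>
     (a \<in> Pn \<and> (\<exists>e. 0 < e \<and> e < snd a \<and> U = ball a e)) \<or>
     (a \<in> A \<and> (\<exists>e>0. U = ball a e \<inter> Xn)) \<or>
     (a \<in> Ln - A \<and> (\<exists>e>0. U = tball a e))"

definition tauA :: "'m::finite pt set \<Rightarrow> 'm pt topology" where
  "tauA A = topology (\<lambda>U. U \<subseteq> Xn \<and> (\<forall>a\<in>U. \<exists>V. basic_nbhd A a V \<and> V \<subseteq> U))"

definition zero_set :: "'a topology \<Rightarrow> 'a set \<Rightarrow> bool" where
  "zero_set X Z \<longleftrightarrow> (\<exists>f. continuous_map X euclideanreal f \<and> Z = {x \<in> topspace X. f x = 0})"

definition z_embedded :: "'a set \<Rightarrow> 'a topology \<Rightarrow> bool" where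
  "z_embedded Y X \<longleftrightarrow>
     (\<forall>Z. zero_set (subtopology X Y) Z \<longrightarrow> (\<exists>Z'. zero_set X Z' \<and> Z = Z' \<inter> Y))"

end

theory Submission
  imports Defs
begin


lemma dist_lt_iff:
  fixes p q :: "'m::finite pt"
  assumes "0 \<le> r"
  shows "dist p q < r \<longleftrightarrow> (dist (fst p) (fst q))\<^sup>2 + (snd p - snd q)\<^sup>2 < r\<^sup>2"
proof -
  have "dist p q = sqrt ((dist (fst p) (fst q))\<^sup>2 + (dist (snd p) (snd q))\<^sup>2)"
    by (metis dist_Pair_Pair prod.collapse)
  moreover have "(dist (snd p) (snd q))\<^sup>2 = (snd p - snd q)\<^sup>2"
    by (simp add: dist_real_def)
  ultimately show ?thesis using assms
    by (metis real_less_rsqrt real_sqrt_less_iff real_sqrt_pow2_iff sqrt_le_D zero_le_power2 add_nonneg_nonneg not_less real_sqrt_power)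
qed

lemma tball_mono:
  assumes "0 < e1" "e1 \<le> e2"
  shows "tball a e1 \<subseteq> tball a e2"
proof
  fix z assume "z \<in> tball a e1"
  then consider "z = a" | "dist (lift a e1) z < e1" by (auto simp: tball_def)
  then show "z \<in> tball a e2"
  proof cases
    case 2
    then have "(dist (fst a) (fst z))\<^sup>2 + (e1 - snd z)\<^sup>2 < e1\<^sup>2"
      using dist_lt_iff[of e1 "lift a e1" z] assms by (simp add: lift_def)
    then have h: "(dist (fst a) (fst z))\<^sup>2 + (snd z)\<^sup>2 < 2 * e1 * snd z"
      by (simp add: power2_eq_square algebra_simps)
    have t: "snd z > 0"
    proof (rule ccontr)
      assume "\<not> snd z > 0"
      then have "2 * e1 * snd z \<le> 0" using assms by (simp add: mult_nonneg_nonpos)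
      moreover have "(dist (fst a) (fst z))\<^sup>2 + (snd z)\<^sup>2 \<ge> 0" by simp
      ultimately show False using h by linarith
    qed
    have "e1 * snd z \<le> e2 * snd z" using t assms by (simp add: mult_right_mono)
    then have "(dist (fst a) (fst z))\<^sup>2 + (snd z)\<^sup>2 < 2 * e2 * snd z" using h by linarith
    then have "(dist (fst a) (fst z))\<^sup>2 + (e2 - snd z)\<^sup>2 < e2\<^sup>2"
      by (simp add: power2_eq_square algebra_simps)
    then have "dist (lift a e2) z < e2"
      using dist_lt_iff[of e2 "lift a e2" z] assms by (simp add: lift_def)
    then show ?thesis by (simp add: tball_def)
  qed (simp add: tball_def)
qed

lemma tball_sub_Pn: "tball a e \<subseteq> {a} \<union> Pn"
proof
  fix z assume "z \<in> tball a e"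
  then consider "z = a" | "dist (lift a e) z < e" by (auto simp: tball_def)
  then show "z \<in> {a} \<union> Pn"
  proof cases
    case 2
    then have "e > 0" by (smt (verit) zero_le_dist)
    have "dist (snd (lift a e)) (snd z) \<le> dist (lift a e) z" by (rule dist_snd_le)
    then have "\<bar>e - snd z\<bar> < e"
      using 2 by (simp add: lift_def dist_real_def)
    then show ?thesis by (simp add: Pn_def abs_less_iff)
  qed auto
qed

lemma tball_meet:
  fixes x d :: "'m::finite pt"
  assumes "x \<in> Ln" "d \<in> Ln" "0 < e" "0 < \<delta>" "dist x d < min e \<delta>"
  shows "(fst x, min e \<delta>) \<in> tball x e \<inter> tball d \<delta>"
proof -
  define m where "m = min e \<delta>"
  have sx: "snd x = 0" "snd d = 0" using assms by (auto simp: Ln_def)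
  have s: "(dist (fst x) (fst d))\<^sup>2 < m\<^sup>2"
    using dist_lt_iff[of m x d] assms sx by (simp add: m_def)
  have "dist (lift x e) (fst x, m) < e"
    using assms by (simp add: lift_def m_def dist_Pair_Pair dist_real_def)
  moreover have "(dist (fst d) (fst x))\<^sup>2 + (\<delta> - m)\<^sup>2 < \<delta>\<^sup>2"
  proof -
    have "m \<le> \<delta>" "0 < m" using assms by (auto simp: m_def)
    then have "m\<^sup>2 + (\<delta> - m)\<^sup>2 \<le> \<delta>\<^sup>2"
      by (simp add: power2_eq_square algebra_simps mult_right_mono)
    then show ?thesis using s by (simp add: dist_commute)
  qed
  then have "dist (lift d \<delta>) (fst x, m) < \<delta>"
    using dist_lt_iff[of \<delta> "lift d \<delta>" "(fst x, m)"] assms by (simp add: lift_def)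
  ultimately show ?thesis by (simp add: tball_def m_def)
qed



lemma Pn_Ln_disj: "Pn \<inter> Ln = {}" by (auto simp: Pn_def Ln_def)

lemma basic_inter:
  assumes "A \<subseteq> Ln" "basic_nbhd A a V1" "basic_nbhd A a V2"
  shows "\<exists>V. basic_nbhd A a V \<and> V \<subseteq> V1 \<inter> V2"
proof -
  have d: "a \<notin> Pn \<or> a \<notin> Ln" using Pn_Ln_disj by blast
  consider (P) "a \<in> Pn" | (AA) "a \<in> A" | (L) "a \<in> Ln - A"
    using assms(2) basic_nbhd_def by blast
  then show ?thesis
  proof cases
    case P
    then have "a \<notin> A" "a \<notin> Ln - A" using assms(1) d by auto
    then obtain e1 e2 where e: "0 < e1" "e1 < snd a" "V1 = ball a e1" "0 < e2" "e2 < snd a" "V2 = ball a e2"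
      using assms(2,3) unfolding basic_nbhd_def by blast
    have "basic_nbhd A a (ball a (min e1 e2))" unfolding basic_nbhd_def
      apply (rule disjI1) using e P by (intro conjI exI[of _ "min e1 e2"]) auto
    then show ?thesis using e by (intro exI[of _ "ball a (min e1 e2)"]) auto
  next
    case AA
    then have "a \<notin> Pn" "a \<notin> Ln - A" using assms(1) d by auto
    then obtain e1 e2 where e: "0 < e1" "V1 = ball a e1 \<inter> Xn" "0 < e2" "V2 = ball a e2 \<inter> Xn"
      using assms(2,3) unfolding basic_nbhd_def by blast
    have "basic_nbhd A a (ball a (min e1 e2) \<inter> Xn)" unfolding basic_nbhd_def
      apply (rule disjI2, rule disjI1) using e AA by (intro conjI exI[of _ "min e1 e2"]) auto
    then show ?thesis using e by (intro exI[of _ "ball a (min e1 e2) \<inter> Xn"]) auto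
  next
    case L
    then have "a \<notin> Pn" "a \<notin> A" using assms(1) d by auto
    then obtain e1 e2 where e: "0 < e1" "V1 = tball a e1" "0 < e2" "V2 = tball a e2"
      using assms(2,3) unfolding basic_nbhd_def by blast
    have "tball a (min e1 e2) \<subseteq> V1 \<inter> V2"
      using tball_mono[of "min e1 e2" e1 a] tball_mono[of "min e1 e2" e2 a] e by auto
    moreover have "basic_nbhd A a (tball a (min e1 e2))" unfolding basic_nbhd_def
      apply (rule disjI2, rule disjI2) using e L by (intro conjI exI[of _ "min e1 e2"]) auto
    ultimately show ?thesis by blast
  qed
qed

lemma istop:
  fixes A :: "'m::finite pt set"
  assumes "A \<subseteq> Ln"
  shows "istopology (\<lambda>U. U \<subseteq> Xn \<and> (\<forall>a\<in>U. \<exists>V. basic_nbhd A a V \<and> V \<subseteq> U))"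
  unfolding istopology_def
proof (rule conjI)
  show "\<forall>S T. S \<subseteq> Xn \<and> (\<forall>a\<in>S. \<exists>V. basic_nbhd A a V \<and> V \<subseteq> S) \<longrightarrow>
     T \<subseteq> Xn \<and> (\<forall>a\<in>T. \<exists>V. basic_nbhd A a V \<and> V \<subseteq> T) \<longrightarrow>
     S \<inter> T \<subseteq> Xn \<and> (\<forall>a\<in>S \<inter> T. \<exists>V. basic_nbhd A a V \<and> V \<subseteq> S \<inter> T)"
  proof (intro allI impI)
    fix S T :: "'m pt set"
    assume S: "S \<subseteq> Xn \<and> (\<forall>a\<in>S. \<exists>V. basic_nbhd A a V \<and> V \<subseteq> S)"
      and T: "T \<subseteq> Xn \<and> (\<forall>a\<in>T. \<exists>V. basic_nbhd A a V \<and> V \<subseteq> T)"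
    have "S \<inter> T \<subseteq> Xn" using S by (meson Int_lower1 order_trans)
    moreover have "\<exists>V. basic_nbhd A a V \<and> V \<subseteq> S \<inter> T" if a: "a \<in> S \<inter> T" for a
    proof -
      from a have aS: "a \<in> S" and aT: "a \<in> T" by auto
      from S aS obtain V1 where V1: "basic_nbhd A a V1" "V1 \<subseteq> S" by auto
      from T aT obtain V2 where V2: "basic_nbhd A a V2" "V2 \<subseteq> T" by auto
      obtain V where V: "basic_nbhd A a V" "V \<subseteq> V1 \<inter> V2" using basic_inter[OF assms V1(1) V2(1)] by auto
      have "V \<subseteq> S \<inter> T" using V(2) V1(2) V2(2) by blast
      then show ?thesis using V(1) by (intro exI[of _ V]) simp
    qed
    ultimately show "S \<inter> T \<subseteq> Xn \<and> (\<forall>a\<in>S \<inter> T. \<exists>V. basic_nbhd A a V \<and> V \<subseteq> S \<inter> T)"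
      by auto
  qed
next
  show "\<forall>K. (\<forall>S\<in>K. S \<subseteq> Xn \<and> (\<forall>a\<in>S. \<exists>V. basic_nbhd A a V \<and> V \<subseteq> S)) \<longrightarrow>
     \<Union>K \<subseteq> Xn \<and> (\<forall>a\<in>\<Union>K. \<exists>V. basic_nbhd A a V \<and> V \<subseteq> \<Union>K)"
  proof (intro allI impI)
    fix K :: "'m pt set set"
    assume h: "\<forall>S\<in>K. S \<subseteq> Xn \<and> (\<forall>a\<in>S. \<exists>V. basic_nbhd A a V \<and> V \<subseteq> S)"
    have "\<Union>K \<subseteq> Xn" using h by auto
    moreover have "\<exists>V. basic_nbhd A a V \<and> V \<subseteq> \<Union>K" if a: "a \<in> \<Union>K" for a
    proof -
      from a obtain S where S: "S \<in> K" "a \<in> S" by auto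
      have "S \<subseteq> Xn \<and> (\<forall>a\<in>S. \<exists>V. basic_nbhd A a V \<and> V \<subseteq> S)" using h S(1) by (rule bspec)
      then have "\<exists>V. basic_nbhd A a V \<and> V \<subseteq> S" using S(2) by (elim conjE) (rule bspec)
      then obtain V where V: "basic_nbhd A a V" "V \<subseteq> S" by (elim exE conjE)
      have "V \<subseteq> \<Union>K" using V(2) S(1) by blast
      then show ?thesis using V(1) by (intro exI[of _ V]) simp
    qed
    ultimately show "\<Union>K \<subseteq> Xn \<and> (\<forall>a\<in>\<Union>K. \<exists>V. basic_nbhd A a V \<and> V \<subseteq> \<Union>K)"
      by auto
  qed
qed

lemma openin_tauA:
  assumes "A \<subseteq> Ln"
  shows "openin (tauA A) U \<longleftrightarrow> U \<subseteq> Xn \<and> (\<forall>a\<in>U. \<exists>V. basic_nbhd A a V \<and> V \<subseteq> U)"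
  unfolding tauA_def using topology_inverse'[OF istop[OF assms]] by simp

lemma Pn_basic:
  assumes "p \<in> Pn"
  shows "basic_nbhd A p (ball p (snd p / 2)) \<and> ball p (snd p / 2) \<subseteq> Pn"
proof -
  have sp: "snd p > 0" using assms by (simp add: Pn_def)
  have "ball p (snd p / 2) \<subseteq> Pn"
  proof
    fix z assume "z \<in> ball p (snd p / 2)"
    then have "dist (snd p) (snd z) < snd p / 2"
      using dist_snd_le[of p z] by simp
    then have "\<bar>snd p - snd z\<bar> < snd p / 2" by (simp add: dist_real_def)
    then have "snd z > 0" by arith
    then show "z \<in> Pn" by (simp add: Pn_def)
  qed
  moreover have "basic_nbhd A p (ball p (snd p / 2))" unfolding basic_nbhd_def
    apply (rule disjI1) using assms sp by (intro conjI exI[of _ "snd p / 2"]) auto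
  ultimately show ?thesis by blast
qed

lemma Pn_sub_Xn: "Pn \<subseteq> Xn" and Ln_sub_Xn: "Ln \<subseteq> Xn" by (auto simp: Xn_def)

lemma tball_sub_Xn: "a \<in> Ln \<Longrightarrow> tball a e \<subseteq> Xn"
  using tball_sub_Pn[of a e] Pn_sub_Xn Ln_sub_Xn by blast

lemma topspace_tauA:
  fixes A :: "'m::finite pt set"
  assumes "A \<subseteq> Ln"
  shows "topspace (tauA A) = Xn"
proof -
  have "openin (tauA A) Xn"
    unfolding openin_tauA[OF assms]
  proof (intro conjI ballI)
    fix a :: "'m pt" assume a: "a \<in> Xn"
    show "\<exists>V. basic_nbhd A a V \<and> V \<subseteq> Xn"
    proof (cases "a \<in> Pn")
      case True then show ?thesis using Pn_basic[OF True, of A] Pn_sub_Xn by blast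
    next
      case False
      then have aL: "a \<in> Ln" using a by (simp add: Xn_def)
      show ?thesis
      proof (cases "a \<in> A")
        case True
        have "basic_nbhd A a (ball a 1 \<inter> Xn)" unfolding basic_nbhd_def
          apply (rule disjI2, rule disjI1) using True by (intro conjI exI[of _ "1::real"]) auto
        then show ?thesis by blast
      next
        case False
        have "basic_nbhd A a (tball a 1)" unfolding basic_nbhd_def
          apply (rule disjI2, rule disjI2) using False aL by (intro conjI exI[of _ "1::real"]) auto
        then show ?thesis using tball_sub_Xn[OF aL, of 1] by blast
      qed
    qed
  qed simp
  moreover have "topspace (tauA A) \<subseteq> Xn"
    using openin_tauA[OF assms] by (metis openin_topspace)
  ultimately show ?thesis by (meson openin_subset subset_antisym)
qed

lemma cont_tball:
  assumes "A \<subseteq> Ln" "continuous_map (tauA A) euclideanreal g" "x \<in> Ln - A" "0 < \<epsilon>"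
  shows "\<exists>e>0. \<forall>y\<in>tball x e. \<bar>g y - g x\<bar> < \<epsilon>"
proof -
  have "openin (tauA A) {y \<in> topspace (tauA A). g y \<in> ball (g x) \<epsilon>}"
    by (rule openin_continuous_map_preimage[OF assms(2)]) simp
  moreover have "x \<in> {y \<in> topspace (tauA A). g y \<in> ball (g x) \<epsilon>}"
    using assms topspace_tauA[OF assms(1)] Ln_sub_Xn by auto
  ultimately obtain V where V: "basic_nbhd A x V" "V \<subseteq> {y \<in> topspace (tauA A). g y \<in> ball (g x) \<epsilon>}"
    unfolding openin_tauA[OF assms(1)] by blast
  have "x \<notin> Pn" using assms(3) Pn_Ln_disj by blast
  then obtain e where "e > 0" "V = tball x e" using V(1) assms(3) by (auto simp: basic_nbhd_def)
  then show ?thesis using V(2) by (intro exI[of _ e]) (auto simp: dist_real_def abs_minus_commute)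
qed



lemma closed_Ln: "closed (Ln :: 'm::finite pt set)"
proof -
  have "Ln = {x :: 'm pt. snd x = 0}" by (simp add: Ln_def)
  moreover have "closed {x :: 'm pt. snd x = 0}"
    by (intro closed_Collect_eq continuous_intros)
  ultimately show ?thesis by simp
qed

theorem mainTheorem20:
  fixes A :: "('m::finite) pt set"
  assumes "A \<subseteq> Ln"
    and "z_embedded Ln (tauA A)"
  shows "\<not> (\<exists>C. C \<subseteq> Ln - A \<and> closedin (subtopology euclidean Ln) C \<and> uncountable C)"
proof
  assume "\<exists>C. C \<subseteq> Ln - A \<and> closedin (subtopology euclidean Ln) C \<and> uncountable C"
  then obtain C where CL: "C \<subseteq> Ln - A" and Ccl: "closedin (subtopology euclidean Ln) C"
    and Cunc: "uncountable C" by blast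
  have Cclosed: "closed C" using Ccl closed_Ln closedin_closed_trans by blast
  obtain \<B> :: "'m pt set set" where Bc: "countable \<B>" and Bo: "\<And>C. C \<in> \<B> \<Longrightarrow> open C"
    and Bb: "\<And>S. open S \<Longrightarrow> \<exists>U. U \<subseteq> \<B> \<and> S = \<Union>U"
    using univ_second_countable by blast
  have basis: "\<exists>b\<in>\<B>. y \<in> b \<and> b \<subseteq> ball y r" if "r > 0" for y :: "'m pt" and r
  proof -
    obtain U where U: "U \<subseteq> \<B>" "ball y r = \<Union>U" using Bb[of "ball y r"] by auto
    have "y \<in> ball y r" using that by simp
    then have "y \<in> \<Union>U" by (simp only: U(2))
    then obtain b where b: "b \<in> U" "y \<in> b" by (rule UnionE)
    have "b \<subseteq> ball y r" using b(1) U(2) by (simp add: Union_upper)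
    then show ?thesis using b U(1) by (intro bexI[of _ b]) auto
  qed
  define K where "K = {x \<in> C. \<forall>e>0. uncountable (C \<inter> ball x e)}"
  have KC: "K \<subseteq> C" by (auto simp: K_def)
  have CK: "countable (C - K)"
  proof -
    have "C - K \<subseteq> \<Union>((\<lambda>b. C \<inter> b) ` {b \<in> \<B>. countable (C \<inter> b)})"
    proof
      fix x assume x: "x \<in> C - K"
      then obtain e where e: "e > 0" "countable (C \<inter> ball x e)" by (auto simp: K_def)
      then obtain b where b: "b \<in> \<B>" "x \<in> b" "b \<subseteq> ball x e" using basis by blast
      then have "countable (C \<inter> b)" using e(2) countable_subset[of "C \<inter> b" "C \<inter> ball x e"] by blast
      then show "x \<in> \<Union>((\<lambda>b. C \<inter> b) ` {b \<in> \<B>. countable (C \<inter> b)})" using b x by blast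
    qed
    moreover have "countable (\<Union>((\<lambda>b. C \<inter> b) ` {b \<in> \<B>. countable (C \<inter> b)}))"
      using Bc by (intro countable_UN) auto
    ultimately show ?thesis using countable_subset by blast
  qed
  have Kunc: "uncountable K"
  proof
    assume "countable K"
    then have "countable ((C - K) \<union> K)" by (rule countable_Un[OF CK])
    moreover have "(C - K) \<union> K = C" using KC by blast
    ultimately show False using Cunc by simp
  qed
  have Kclosed: "closed K"
    unfolding closed_limpt
  proof (intro allI impI)
    fix x assume x: "x islimpt K"
    then have "x islimpt C" using KC islimpt_subset by blast
    then have xC: "x \<in> C" using Cclosed closed_limpt by blast
    have "uncountable (C \<inter> ball x e)" if e: "e > 0" for e
    proof -
      have "\<forall>\<epsilon>>0. \<exists>x'\<in>K. x' \<noteq> x \<and> dist x' x < \<epsilon>" using x by (simp add: islimpt_approachable)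
      moreover have "e / 2 > 0" using e by simp
      ultimately have "\<exists>x'\<in>K. x' \<noteq> x \<and> dist x' x < e / 2" by blast
      then obtain x' where x': "x' \<in> K" "dist x' x < e / 2" by blast
      have "\<forall>e>0. uncountable (C \<inter> ball x' e)" using x'(1) unfolding K_def by blast
      then have "uncountable (C \<inter> ball x' (e/2))" using e by simp
      moreover have "ball x' (e/2) \<subseteq> ball x e"
      proof
        fix z assume "z \<in> ball x' (e/2)"
        then have "dist x' z < e/2" by simp
        moreover have "dist x z \<le> dist x x' + dist x' z" by (rule dist_triangle)
        moreover have "dist x x' = dist x' x" by (rule dist_commute)
        ultimately show "z \<in> ball x e" using x'(2) by simp
      qed
      ultimately show ?thesis using countable_subset[of "C \<inter> ball x' (e/2)" "C \<inter> ball x e"] by blast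
    qed
    then show "x \<in> K" using xC unfolding K_def by blast
  qed
  have Knoiso: "\<exists>z\<in>K. z \<noteq> d \<and> dist z d < r" if "d \<in> K" "r > 0" for d r
  proof (rule ccontr)
    assume nz: "\<not> ?thesis"
    have "C \<inter> ball d r \<subseteq> insert d (C - K)"
    proof
      fix z assume z: "z \<in> C \<inter> ball d r"
      show "z \<in> insert d (C - K)"
      proof (rule ccontr)
        assume "z \<notin> insert d (C - K)"
        then have "z \<in> K" "z \<noteq> d" using z by auto
        moreover have "dist z d < r" using z by (simp add: dist_commute)
        ultimately show False using nz by blast
      qed
    qed
    moreover have "countable (insert d (C - K))" using CK by simp
    ultimately have "countable (C \<inter> ball d r)" by (rule countable_subset)
    moreover have "\<forall>e>0. uncountable (C \<inter> ball d e)" using that(1) unfolding K_def by blast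
    ultimately show False using that(2) by blast
  qed
  define D where "D = (\<lambda>b. SOME x. x \<in> b \<inter> K) ` {b \<in> \<B>. b \<inter> K \<noteq> {}}"
  have "countable {b \<in> \<B>. b \<inter> K \<noteq> {}}" using Bc by (rule countable_subset[rotated]) blast
  then have Dc: "countable D" unfolding D_def by (rule countable_image)
  have DK: "D \<subseteq> K"
  proof
    fix x assume "x \<in> D"
    then obtain b where b: "b \<inter> K \<noteq> {}" "x = (SOME x. x \<in> b \<inter> K)" unfolding D_def by blast
    then have "\<exists>y. y \<in> b \<inter> K" by blast
    then have "(SOME x. x \<in> b \<inter> K) \<in> b \<inter> K" by (rule someI_ex)
    then show "x \<in> K" using b(2) by simp
  qed
  have Ddense: "\<exists>d\<in>D. dist d y < r" if yK: "y \<in> K" and r: "r > 0" for y r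
  proof -
    obtain b where b: "b \<in> \<B>" "y \<in> b" "b \<subseteq> ball y r" using basis[OF r] by blast
    let ?d = "SOME x. x \<in> b \<inter> K"
    have "y \<in> b \<inter> K" using b yK by simp
    then have d: "?d \<in> b \<inter> K" by (rule someI)
    have "?d \<in> D" unfolding D_def using b(1) d by blast
    moreover have "dist y ?d < r" using d b(3) by auto
    ultimately show ?thesis by (metis dist_commute)
  qed
  have DL: "D \<subseteq> Ln - A" using DK KC CL by blast
  have topL: "topspace (subtopology (tauA A) Ln) = Ln"
    using topspace_tauA[OF assms(1)] Ln_sub_Xn by auto
  have open1: "openin (tauA A) (D \<union> Pn)"
    unfolding openin_tauA[OF assms(1)]
  proof (intro conjI ballI)
    show "D \<union> Pn \<subseteq> Xn" using DL Ln_sub_Xn Pn_sub_Xn by blast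
    fix a assume a: "a \<in> D \<union> Pn"
    show "\<exists>V. basic_nbhd A a V \<and> V \<subseteq> D \<union> Pn"
    proof (cases "a \<in> Pn")
      case True then show ?thesis using Pn_basic[OF True, of A] by blast
    next
      case False
      then have aD: "a \<in> D" using a by blast
      have "basic_nbhd A a (tball a 1)" unfolding basic_nbhd_def
        apply (rule disjI2, rule disjI2) using aD DL by (intro conjI exI[of _ "1::real"]) auto
      then show ?thesis using tball_sub_Pn[of a 1] aD by blast
    qed
  qed
  have open2: "openin (tauA A) (Xn - D)"
    unfolding openin_tauA[OF assms(1)]
  proof (intro conjI ballI)
    show "Xn - D \<subseteq> Xn" by blast
    fix a assume a: "a \<in> Xn - D"
    show "\<exists>V. basic_nbhd A a V \<and> V \<subseteq> Xn - D"
    proof (cases "a \<in> Pn")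
      case True then show ?thesis using Pn_basic[OF True, of A] Pn_Ln_disj DL Pn_sub_Xn by blast
    next
      case False
      then have aL: "a \<in> Ln" using a by (simp add: Xn_def)
      show ?thesis
      proof (cases "a \<in> A")
        case True
        then have "a \<notin> K" using KC CL by blast
        then have "open (- K)" "a \<in> - K" using Kclosed by auto
        then obtain e where e: "e > 0" "ball a e \<subseteq> - K" using open_contains_ball by blast
        have "basic_nbhd A a (ball a e \<inter> Xn)" unfolding basic_nbhd_def
          apply (rule disjI2, rule disjI1) using True e by (intro conjI exI[of _ e]) auto
        moreover have "ball a e \<inter> Xn \<subseteq> Xn - D" using e DK by blast
        ultimately show ?thesis by blast
      next
        case False
        have "basic_nbhd A a (tball a 1)" unfolding basic_nbhd_def
          apply (rule disjI2, rule disjI2) using False aL by (intro conjI exI[of _ "1::real"]) auto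
        moreover have "tball a 1 \<subseteq> Xn - D"
          using tball_sub_Pn[of a 1] tball_sub_Xn[OF aL, of 1] a Pn_Ln_disj DL by blast
        ultimately show ?thesis by blast
      qed
    qed
  qed
  define f where "f = (\<lambda>x. if x \<in> D then 0 else (1::real))"
  have zD: "zero_set (subtopology (tauA A) Ln) D"
    unfolding zero_set_def
  proof (intro exI conjI)
    show "D = {x \<in> topspace (subtopology (tauA A) Ln). f x = 0}"
      using topL DL by (auto simp: f_def)
    show "continuous_map (subtopology (tauA A) Ln) euclideanreal f"
      unfolding continuous_map_def
    proof (intro conjI allI impI)
      show "f \<in> topspace (subtopology (tauA A) Ln) \<rightarrow> topspace euclideanreal" by simp
      fix U :: "real set" assume "openin euclideanreal U"
      have oD: "openin (subtopology (tauA A) Ln) D"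
        unfolding openin_subtopology using open1 DL Pn_Ln_disj by (intro exI[of _ "D \<union> Pn"]) auto
      have oLD: "openin (subtopology (tauA A) Ln) (Ln - D)"
        unfolding openin_subtopology using open2 Ln_sub_Xn by (intro exI[of _ "Xn - D"]) auto
      have oL: "openin (subtopology (tauA A) Ln) Ln"
        using openin_topspace[of "subtopology (tauA A) Ln"] topL by simp
      let ?S = "{x \<in> topspace (subtopology (tauA A) Ln). f x \<in> U}"
      have "?S \<in> {{}, D, Ln - D, Ln}"
        using topL DL by (cases "0 \<in> U"; cases "1 \<in> U") (auto simp: f_def)
      moreover have o0: "openin (subtopology (tauA A) Ln) {}" by (rule openin_empty)
      have "\<forall>T\<in>{{}, D, Ln - D, Ln}. openin (subtopology (tauA A) Ln) T"
        using o0 oD oLD oL by (simp only: ball_simps simp_thms)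
      ultimately show "openin (subtopology (tauA A) Ln) ?S"
        by (rule bspec[rotated])
    qed
  qed
  then obtain Z' where "zero_set (tauA A) Z'" "D = Z' \<inter> Ln"
    using assms(2) unfolding z_embedded_def by blast
  then obtain g where gc: "continuous_map (tauA A) euclideanreal g"
    and DZ: "D = {x \<in> Xn. g x = 0} \<inter> Ln"
    unfolding zero_set_def using topspace_tauA[OF assms(1)] by auto
  have gD: "g x = 0 \<longleftrightarrow> x \<in> D" if "x \<in> Ln" for x
    using DZ that Ln_sub_Xn by blast
  define P where "P k = {x \<in> K. \<forall>y\<in>tball x (inverse (real (Suc k))). \<bar>g y\<bar> \<ge> inverse (real (Suc k))}" for k
  have cover: "\<exists>k. x \<in> P k" if x: "x \<in> K - D" for x
  proof -
    have xL: "x \<in> Ln - A" using x KC CL by blast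
    then have gx: "g x \<noteq> 0" using gD x by blast
    then obtain e where e: "e > 0" "\<forall>y\<in>tball x e. \<bar>g y - g x\<bar> < \<bar>g x\<bar> / 2"
      using cont_tball[OF assms(1) gc xL, of "\<bar>g x\<bar> / 2"] by auto
    have pos: "min e (\<bar>g x\<bar> / 2) > 0" using e gx by simp
    obtain k where k: "inverse (real (Suc k)) < min e (\<bar>g x\<bar> / 2)"
      using reals_Archimedean[OF pos] by blast
    have "\<bar>g y\<bar> \<ge> inverse (real (Suc k))" if "y \<in> tball x (inverse (real (Suc k)))" for y
    proof -
      have "y \<in> tball x e" using tball_mono[of "inverse (real (Suc k))" e x] that k by auto
      then have "\<bar>g y - g x\<bar> < \<bar>g x\<bar> / 2" using e by blast
      then show ?thesis using k by linarith
    qed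
    then have "x \<in> P k" using x unfolding P_def by blast
    then show ?thesis by blast
  qed
  have notcl: "d \<notin> closure (P k)" if d: "d \<in> D" for d k
  proof
    assume dcl: "d \<in> closure (P k)"
    define \<epsilon> where "\<epsilon> = inverse (real (Suc k))"
    have \<epsilon>: "\<epsilon> > 0" by (simp add: \<epsilon>_def)
    have dL: "d \<in> Ln - A" using d DL by blast
    have gd: "g d = 0" using gD d dL by blast
    obtain \<delta> where \<delta>: "\<delta> > 0" "\<forall>y\<in>tball d \<delta>. \<bar>g y - g d\<bar> < \<epsilon>"
      using cont_tball[OF assms(1) gc dL \<epsilon>] by blast
    obtain x where x: "x \<in> P k" "dist x d < min \<epsilon> \<delta>"
      using dcl \<epsilon> \<delta> closure_approachable[of d "P k"] by (metis min_less_iff_conj)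
    have xL: "x \<in> Ln" using x(1) KC CL by (auto simp: P_def)
    have z: "(fst x, min \<epsilon> \<delta>) \<in> tball x \<epsilon> \<inter> tball d \<delta>"
      using tball_meet[OF xL _ \<epsilon> \<delta>(1) x(2)] dL by blast
    have "\<bar>g (fst x, min \<epsilon> \<delta>)\<bar> \<ge> \<epsilon>" using x(1) z by (auto simp: P_def \<epsilon>_def)
    moreover have "\<bar>g (fst x, min \<epsilon> \<delta>)\<bar> < \<epsilon>" using \<delta> z gd by auto
    ultimately show False by linarith
  qed
  define G where "G = range (\<lambda>k. K - closure (P k)) \<union> (\<lambda>d. K - {d}) ` D"
  have Gc: "countable G" unfolding G_def using Dc by simp
  have Gprop: "openin (top_of_set K) T \<and> K \<subseteq> closure T" if T: "T \<in> G" for T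
  proof -
    consider k where "T = K - closure (P k)" | d where "d \<in> D" "T = K - {d}"
      using T unfolding G_def by blast
    then show ?thesis
    proof cases
      case 1
      have "openin (top_of_set K) (K \<inter> - closure (P k))"
        by (intro openin_open_Int) auto
      moreover have "K \<subseteq> closure T"
      proof
        fix y assume y: "y \<in> K"
        show "y \<in> closure T"
          unfolding closure_approachable
        proof (intro allI impI)
          fix r :: real assume r: "r > 0"
          show "\<exists>z\<in>T. dist z y < r"
          proof (rule ccontr)
            assume nz: "\<not> ?thesis"
            obtain d where d: "d \<in> D" "dist d y < r" using Ddense y r by blast
            then have "d \<in> closure (P k)" using nz DK 1 by blast
            then show False using notcl d by blast
          qed
        qed
      qed
      ultimately show ?thesis using 1 by (simp add: Diff_eq)
    next
      case 2
      have "openin (top_of_set K) (K \<inter> - {d})"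
        by (intro openin_open_Int) auto
      moreover have "K \<subseteq> closure T"
      proof
        fix y assume y: "y \<in> K"
        show "y \<in> closure T"
          unfolding closure_approachable
        proof (intro allI impI)
          fix r :: real assume r: "r > 0"
          show "\<exists>z\<in>T. dist z y < r"
          proof (cases "y = d")
            case True
            then show ?thesis using Knoiso[of d r] y r 2 by auto
          next
            case False
            then show ?thesis using y r 2 by (intro bexI[of _ y]) auto
          qed
        qed
      qed
      ultimately show ?thesis using 2 by (simp add: Diff_eq)
    qed
  qed
  have "K \<subseteq> closure (\<Inter>G)"
    by (rule Baire[OF Kclosed Gc]) (use Gprop in blast)
  moreover have "K \<noteq> {}" using Kunc by auto
  ultimately have "\<Inter>G \<noteq> {}" by auto
  then obtain z where z: "z \<in> \<Inter>G" by blast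
  have zK: "z \<in> K" using z unfolding G_def by blast
  have zD: "z \<notin> D" using z unfolding G_def by blast
  obtain k where "z \<in> P k" using cover zK zD by blast
  moreover have "z \<notin> closure (P k)" using z unfolding G_def by blast
  ultimately show False using closure_subset by blast
qed

end
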